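(* Let $K$ be a field, $\mathcal P=(P,\preceq)$ a finite or countable locally finite poset and $\sim$ a bialgebra compatible equivalence relation on its nonempty intervals such that $\nabla([[a,x]]\otimes[[x,b]])=[[a,b]]$ for all $a\preceq x\preceq b$. Then the m-weak interval bialgebra $(L,\nabla,\eta;\Delta,\epsilon)$ is an m-weak Hopf algebra, and its antipode is $S=\widehat{\mu}$, where $\mu=\zeta^{\star-1}$ is the Möbius function, $\zeta$ is the constant function $1$ in the incidence algebra, and $\widehat\mu(I)=\mu(I)\,I$ for every class $I$.
   Context: Locally finite: all intervals $[a,b]$ are finite. $[[a,b]]$ is the $\sim$-class of $[a,b]$ and $L$ is the $K$-space with basis the classes. Bialgebra compatible: $[a,b]\sim[a',b']$, $[b,c]\sim[b',c']$ imply $[a,c]\sim[a',c']$; for $[a,b]\sim[a',b']$ there is a bijection $f:[a,b]\to[a',b']$ with $[a,x]\sim[a',f(x)]$, $[x,b]\sim[f(x),b']$; and $[a,a]\sim[b,b]$ for all $a,b$. On $L$: $\eta(r)=r[[a,a]]$; $\nabla(I\otimes J)=n_{I,J}[[a,b]]$ if there are $a\preceq x\preceq b$ with $I=[[a,x]]$, $J=[[x,b]]$ ($n_{I,J}$ the number of such $x$), else $0$; $\Delta([[a,b]])=\sum_{x\in[a,b]}[[a,x]]\otimes[[x,b]]$; $\epsilon([[a,b]])=\delta_{a,b}$. The incidence algebra consists of functions $\Phi$ from classes to $K$ with $(\Phi\star\Psi)([[a,b]])=\sum_{a\preceq x\preceq b}\Phi([[a,x]])\Psi([[x,b]])$ and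 unit $U([[a,b]])=\delta_{a,b}$. An m-weak bialgebra is an algebra $(L,\nabla,\eta)$ and coalgebra $(L,\Delta,\epsilon)$ with $\Delta\circ\eta=\eta\otimes\eta$, $\epsilon\circ\nabla=\epsilon\otimes\epsilon$, $\epsilon\circ\eta=\mathrm{id}_K$; it is an m-weak Hopf algebra if $\mathrm{id}_L$ has an inverse $S$ (the antipode) in the convolution algebra $(\mathrm{Hom}_K(L,L),\star,\eta\circ\epsilon)$, $f\star g=\nabla\circ(f\otimes g)\circ\Delta$. *)

theory Defs
  imports "HOL-Library.Countable_Set"
begin

definition supp :: "('i \<Rightarrow> 'k::zero) \<Rightarrow> 'i set" where
  "supp v = {i. v i \<noteq> 0}"

text \<open>The K-space with basis C: finitely supported functions C -> K.\<close>
definition fvec :: "'i set \<Rightarrow> ('i \<Rightarrow> 'k::zero) set" where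
  "fvec C = {v. finite (supp v) \<and> supp v \<subseteq> C}"

definition bas :: "'i \<Rightarrow> 'i \<Rightarrow> 'k::{zero,one}" where
  "bas i = (\<lambda>j. if j = i then 1 else 0)"

definition linext :: "('i \<Rightarrow> 'j \<Rightarrow> 'k::comm_ring_1) \<Rightarrow> ('i \<Rightarrow> 'k) \<Rightarrow> 'j \<Rightarrow> 'k" where
  "linext f v = (\<lambda>j. \<Sum>i\<in>supp v. v i * f i j)"

text \<open>Tensor product of vectors: the basis of V (x) W is indexed by pairs.\<close>
definition tens :: "('i \<Rightarrow> 'k::comm_ring_1) \<Rightarrow> ('j \<Rightarrow> 'k) \<Rightarrow> ('i \<times> 'j) \<Rightarrow> 'k" where
  "tens u v = (\<lambda>(i,j). u i * v j)"

definition tmap :: "(('i \<Rightarrow> 'k::comm_ring_1) \<Rightarrow> ('j \<Rightarrow> 'k)) \<Rightarrow> (('i2 \<Rightarrow> 'k) \<Rightarrow> ('j2 \<Rightarrow> 'k))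
    \<Rightarrow> ('i \<times> 'i2 \<Rightarrow> 'k) \<Rightarrow> ('j \<times> 'j2 \<Rightarrow> 'k)" where
  "tmap F G = linext (\<lambda>(i,j). tens (F (bas i)) (G (bas j)))"

definition assoc_r :: "(('i \<times> 'j) \<times> 'l \<Rightarrow> 'k) \<Rightarrow> ('i \<times> 'j \<times> 'l \<Rightarrow> 'k)" where
  "assoc_r w = (\<lambda>(x,y,z). w ((x,y),z))"

definition assoc_l :: "('i \<times> 'j \<times> 'l \<Rightarrow> 'k) \<Rightarrow> (('i \<times> 'j) \<times> 'l \<Rightarrow> 'k)" where
  "assoc_l w = (\<lambda>((x,y),z). w (x,y,z))"

definition lin_on :: "('i \<Rightarrow> 'k::comm_ring_1) set \<Rightarrow> ('j \<Rightarrow> 'k) set \<Rightarrow> (('i \<Rightarrow> 'k) \<Rightarrow> ('j \<Rightarrow> 'k)) \<Rightarrow> bool" where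
  "lin_on V W F \<longleftrightarrow> (\<forall>v\<in>V. F v \<in> W)
     \<and> (\<forall>u\<in>V. \<forall>v\<in>V. F (\<lambda>i. u i + v i) = (\<lambda>j. F u j + F v j))
     \<and> (\<forall>c. \<forall>v\<in>V. F (\<lambda>i. c * v i) = (\<lambda>j. c * F v j))"

definition lin_form :: "('i \<Rightarrow> 'k::comm_ring_1) set \<Rightarrow> (('i \<Rightarrow> 'k) \<Rightarrow> 'k) \<Rightarrow> bool" where
  "lin_form V E \<longleftrightarrow> (\<forall>u\<in>V. \<forall>v\<in>V. E (\<lambda>i. u i + v i) = E u + E v)
     \<and> (\<forall>c. \<forall>v\<in>V. E (\<lambda>i. c * v i) = c * E v)"

text \<open>L = fvec C. Maps: Nb : L(x)L -> L, Et : K -> L, Dl : L -> L(x)L, Ep : L -> K.\<close>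
definition mweak_bialgebra ::
  "'i set \<Rightarrow> (('i \<times> 'i \<Rightarrow> 'k::field) \<Rightarrow> ('i \<Rightarrow> 'k)) \<Rightarrow> ('k \<Rightarrow> ('i \<Rightarrow> 'k))
    \<Rightarrow> (('i \<Rightarrow> 'k) \<Rightarrow> ('i \<times> 'i \<Rightarrow> 'k)) \<Rightarrow> (('i \<Rightarrow> 'k) \<Rightarrow> 'k) \<Rightarrow> bool" where
  "mweak_bialgebra C Nb Et Dl Ep \<longleftrightarrow>
     \<comment> \<open>linearity of the structure maps\<close>
     lin_on (fvec (C \<times> C)) (fvec C) Nb
   \<and> (\<forall>r. Et r \<in> fvec C) \<and> (\<forall>r s. Et (r + s) = (\<lambda>i. Et r i + Et s i))
   \<and> (\<forall>r s. Et (r * s) = (\<lambda>i. r * Et s i))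
   \<and> lin_on (fvec C) (fvec (C \<times> C)) Dl
   \<and> lin_form (fvec C) Ep
     \<comment> \<open>algebra: associativity and unit\<close>
   \<and> (\<forall>t\<in>fvec (C \<times> C \<times> C). Nb (tmap Nb id (assoc_l t)) = Nb (tmap id Nb t))
   \<and> (\<forall>v\<in>fvec C. Nb (tens (Et 1) v) = v \<and> Nb (tens v (Et 1)) = v)
     \<comment> \<open>coalgebra: coassociativity and counit\<close>
   \<and> (\<forall>v\<in>fvec C. assoc_r (tmap Dl id (Dl v)) = tmap id Dl (Dl v))
   \<and> (\<forall>v\<in>fvec C. linext (\<lambda>(i,j) k. Ep (bas i) * bas j k) (Dl v) = v
                 \<and> linext (\<lambda>(i,j) k. Ep (bas j) * bas i k) (Dl v) = v)
     \<comment> \<open>weak compatibility conditions\<close>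
   \<and> (\<forall>r. Dl (Et r) = (\<lambda>p. r * tens (Et 1) (Et 1) p))
   \<and> (\<forall>w\<in>fvec (C \<times> C). Ep (Nb w) = (\<Sum>p\<in>supp w. w p * Ep (bas (fst p)) * Ep (bas (snd p))))
   \<and> (\<forall>r. Ep (Et r) = r)"

definition conv where
  "conv Nb Dl F G = (\<lambda>v. Nb (tmap F G (Dl v)))"

text \<open>S is an inverse of id_L in (Hom_K(L,L), *, Et o Ep); maps are compared on L.\<close>
definition is_antipode where
  "is_antipode C Nb Et Dl Ep S \<longleftrightarrow>
     lin_on (fvec C) (fvec C) S \<and>
     (\<forall>v\<in>fvec C. conv Nb Dl S id v = Et (Ep v) \<and> conv Nb Dl id S v = Et (Ep v))"

definition mweak_hopf where
  "mweak_hopf C Nb Et Dl Ep \<longleftrightarrow> mweak_bialgebra C Nb Et Dl Ep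
     \<and> (\<exists>S. is_antipode C Nb Et Dl Ep S)"

definition ipairs :: "('a::order \<times> 'a) set" where
  "ipairs = {(a,b). a \<le> b}"

definition locally_finite :: "'a::order itself \<Rightarrow> bool" where
  "locally_finite _ \<longleftrightarrow> (\<forall>a b :: 'a. finite {a..b})"

definition bialg_compatible :: "(('a::order \<times> 'a) \<times> ('a \<times> 'a)) set \<Rightarrow> bool" where
  "bialg_compatible R \<longleftrightarrow> equiv ipairs R
   \<and> (\<forall>a b c a' b' c'. ((a,b),(a',b')) \<in> R \<and> ((b,c),(b',c')) \<in> R \<longrightarrow> ((a,c),(a',c')) \<in> R)
   \<and> (\<forall>a b a' b'. ((a,b),(a',b')) \<in> R \<longrightarrow>
        (\<exists>f. bij_betw f {a..b} {a'..b'} \<and>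
             (\<forall>x\<in>{a..b}. ((a,x),(a',f x)) \<in> R \<and> ((x,b),(f x,b')) \<in> R)))
   \<and> (\<forall>a b. ((a,a),(b,b)) \<in> R)"

text \<open>The class [[a,b]] and the set of all classes (the basis of L).\<close>
definition cls :: "(('a \<times> 'a) \<times> ('a \<times> 'a)) set \<Rightarrow> 'a \<Rightarrow> 'a \<Rightarrow> ('a \<times> 'a) set" where
  "cls R a b = R `` {(a,b)}"

definition classes :: "(('a::order \<times> 'a) \<times> ('a \<times> 'a)) set \<Rightarrow> ('a \<times> 'a) set set" where
  "classes R = ipairs // R"

definition rep :: "('a \<times> 'a) set \<Rightarrow> 'a \<times> 'a" where
  "rep I = (SOME p. p \<in> I)"

definition eta_L :: "(('a::order \<times> 'a) \<times> ('a \<times> 'a)) set \<Rightarrow> 'k::field \<Rightarrow> ('a \<times> 'a) set \<Rightarrow> 'k" where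
  "eta_L R r = (\<lambda>I. r * bas (cls R (SOME a. True) (SOME a. True)) I)"

definition mul_b :: "(('a::order \<times> 'a) \<times> ('a \<times> 'a)) set \<Rightarrow> ('a \<times> 'a) set \<Rightarrow> ('a \<times> 'a) set
    \<Rightarrow> ('a \<times> 'a) set \<Rightarrow> 'k::field" where
  "mul_b R I J =
    (if \<exists>a x b. a \<le> x \<and> x \<le> b \<and> I = cls R a x \<and> J = cls R x b then
       (case (SOME (a,b). \<exists>x. a \<le> x \<and> x \<le> b \<and> I = cls R a x \<and> J = cls R x b) of (a,b) \<Rightarrow>
         (\<lambda>K. of_nat (card {x. a \<le> x \<and> x \<le> b \<and> I = cls R a x \<and> J = cls R x b}) * bas (cls R a b) K))
     else (\<lambda>K. 0))"

definition nabla_L :: "(('a::order \<times> 'a) \<times> ('a \<times> 'a)) set \<Rightarrow> (('a \<times> 'a) set \<times> ('a \<times> 'a) set \<Rightarrow> 'k::field)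
    \<Rightarrow> ('a \<times> 'a) set \<Rightarrow> 'k" where
  "nabla_L R = linext (\<lambda>(I,J). mul_b R I J)"

definition comul_b :: "(('a::order \<times> 'a) \<times> ('a \<times> 'a)) set \<Rightarrow> ('a \<times> 'a) set
    \<Rightarrow> ('a \<times> 'a) set \<times> ('a \<times> 'a) set \<Rightarrow> 'k::field" where
  "comul_b R I = (case rep I of (a,b) \<Rightarrow>
      (\<lambda>p. \<Sum>x\<in>{a..b}. bas (cls R a x, cls R x b) p))"

definition delta_L :: "(('a::order \<times> 'a) \<times> ('a \<times> 'a)) set \<Rightarrow> (('a \<times> 'a) set \<Rightarrow> 'k::field)
    \<Rightarrow> ('a \<times> 'a) set \<times> ('a \<times> 'a) set \<Rightarrow> 'k" where
  "delta_L R = linext (comul_b R)"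

definition delta_cls :: "('a \<times> 'a) set \<Rightarrow> 'k::field" where
  "delta_cls I = (case rep I of (a,b) \<Rightarrow> if a = b then 1 else 0)"

definition eps_L :: "(('a::order \<times> 'a) \<times> ('a \<times> 'a)) set \<Rightarrow> (('a \<times> 'a) set \<Rightarrow> 'k::field) \<Rightarrow> 'k" where
  "eps_L R v = (\<Sum>I\<in>supp v. v I * delta_cls I)"

definition inc_conv :: "(('a::order \<times> 'a) \<times> ('a \<times> 'a)) set \<Rightarrow> (('a \<times> 'a) set \<Rightarrow> 'k::field)
    \<Rightarrow> (('a \<times> 'a) set \<Rightarrow> 'k) \<Rightarrow> ('a \<times> 'a) set \<Rightarrow> 'k" where
  "inc_conv R \<Phi> \<Psi> = (\<lambda>I. case rep I of (a,b) \<Rightarrow>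
      \<Sum>x\<in>{x. a \<le> x \<and> x \<le> b}. \<Phi> (cls R a x) * \<Psi> (cls R x b))"

definition zeta :: "('a \<times> 'a) set \<Rightarrow> 'k::field" where
  "zeta = (\<lambda>I. 1)"

definition inc_unit :: "('a \<times> 'a) set \<Rightarrow> 'k::field" where
  "inc_unit = delta_cls"

definition mobius :: "(('a::order \<times> 'a) \<times> ('a \<times> 'a)) set \<Rightarrow> ('a \<times> 'a) set \<Rightarrow> 'k::field" where
  "mobius R = (THE \<Phi>. (\<forall>I. I \<notin> classes R \<longrightarrow> \<Phi> I = 0)
       \<and> (\<forall>I\<in>classes R. inc_conv R \<Phi> zeta I = inc_unit I \<and> inc_conv R zeta \<Phi> I = inc_unit I))"

definition hatmu :: "(('a::order \<times> 'a) \<times> ('a \<times> 'a)) set \<Rightarrow> (('a \<times> 'a) set \<Rightarrow> 'k::field) \<Rightarrow> ('a \<times> 'a) set \<Rightarrow> 'k" where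
  "hatmu R = linext (\<lambda>I J. mobius R I * bas I J)"

end

theory Submission
  imports Defs
begin
lemma supp_bas[simp]: "supp (bas i :: 'i \<Rightarrow> 'k::zero_neq_one) = {i}"
  by (auto simp: supp_def bas_def)

lemma linext_sum:
  assumes "finite S" "supp v \<subseteq> S"
  shows "linext f v j = (\<Sum>i\<in>S. v i * f i j)"
  unfolding linext_def
  by (rule sum.mono_neutral_left) (use assms in \<open>auto simp: supp_def\<close>)

lemma linext_bas[simp]: "linext f (bas i :: 'i \<Rightarrow> 'k::{comm_ring_1}) = f i"
proof (cases "(1::'k) = 0")
  case True
  then have "\<And>x::'k. x = 0" by (metis mult_1 mult_zero_left)
  then show ?thesis by (metis ext)
next
  case False
  then have "supp (bas i :: 'i \<Rightarrow> 'k) = {i}" by (auto simp: supp_def bas_def)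
  then show ?thesis by (auto simp: linext_def bas_def intro!: ext)
qed

lemma linext_bas_id:
  assumes "finite (supp v)"
  shows "linext bas v = (v :: 'i \<Rightarrow> 'k::comm_ring_1)"
proof
  fix j
  have "linext bas v j = (\<Sum>i\<in>supp v. if i = j then v j else 0)"
    unfolding linext_def bas_def by (intro sum.cong) auto
  also have "\<dots> = (if j \<in> supp v then v j else 0)" by (rule sum.delta[OF assms])
  also have "\<dots> = v j" by (simp add: supp_def)
  finally show "linext bas v j = v j" .
qed

lemma supp_linext:
  "supp (linext f v) \<subseteq> (\<Union>i\<in>supp v. supp (f i))"
proof
  fix j assume "j \<in> supp (linext f v)"
  then have "(\<Sum>i\<in>supp v. v i * f i j) \<noteq> 0" by (simp add: supp_def linext_def)
  then obtain i where "i \<in> supp v" "v i * f i j \<noteq> 0"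
    by (rule sum.not_neutral_contains_not_neutral)
  then show "j \<in> (\<Union>i\<in>supp v. supp (f i))" by (auto simp: supp_def)
qed

lemma finite_supp_linext:
  "finite (supp v) \<Longrightarrow> (\<And>i. i \<in> supp v \<Longrightarrow> finite (supp (f i))) \<Longrightarrow> finite (supp (linext f v))"
  by (rule finite_subset[OF supp_linext]) auto

lemma linext_comp:
  assumes fv: "finite (supp v)" and ff: "\<And>i. i \<in> supp v \<Longrightarrow> finite (supp (f i))"
  shows "linext g (linext f v) = linext (\<lambda>i. linext g (f i)) v"
proof
  fix j
  define S where "S = (\<Union>i\<in>supp v. supp (f i))"
  have fS: "finite S" using fv ff by (auto simp: S_def)
  have "linext g (linext f v) j = (\<Sum>k\<in>S. linext f v k * g k j)"
    by (rule linext_sum[OF fS]) (simp add: S_def supp_linext)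
  also have "\<dots> = (\<Sum>k\<in>S. \<Sum>i\<in>supp v. v i * (f i k * g k j))"
    by (simp add: linext_def sum_distrib_right mult.assoc)
  also have "\<dots> = (\<Sum>i\<in>supp v. v i * (\<Sum>k\<in>S. f i k * g k j))"
    by (subst sum.swap) (simp add: sum_distrib_left)
  also have "\<dots> = (\<Sum>i\<in>supp v. v i * linext g (f i) j)"
    by (intro sum.cong refl arg_cong[where f="\<lambda>x. _ * x"] linext_sum[symmetric] fS)
       (auto simp: S_def)
  also have "\<dots> = linext (\<lambda>i. linext g (f i)) v j" by (simp add: linext_def)
  finally show "linext g (linext f v) j = linext (\<lambda>i. linext g (f i)) v j" .
qed

lemma linext_cong: "(\<And>i. i \<in> supp v \<Longrightarrow> f i = g i) \<Longrightarrow> linext f v = linext g v"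
  by (auto simp: linext_def intro!: ext sum.cong)

lemma supp_add: "supp (\<lambda>i. u i + v i) \<subseteq> supp u \<union> supp (v :: 'i \<Rightarrow> 'k::comm_ring_1)"
  by (auto simp: supp_def)

lemma linext_add:
  fixes u v :: "'i \<Rightarrow> 'k::comm_ring_1"
  assumes "finite (supp u)" "finite (supp v)"
  shows "linext f (\<lambda>i. u i + v i) = (\<lambda>j. linext f u j + linext f v j)"
proof
  fix j
  let ?S = "supp u \<union> supp v"
  have "linext f (\<lambda>i. u i + v i) j = (\<Sum>i\<in>?S. (u i + v i) * f i j)"
    using assms supp_add[of u v] by (intro linext_sum) auto
  also have "\<dots> = (\<Sum>i\<in>?S. u i * f i j) + (\<Sum>i\<in>?S. v i * f i j)"
    by (simp add: distrib_right sum.distrib)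
  also have "\<dots> = linext f u j + linext f v j"
    using assms by (simp add: linext_sum[of ?S u] linext_sum[of ?S v])
  finally show "linext f (\<lambda>i. u i + v i) j = linext f u j + linext f v j" .
qed

lemma linext_smult:
  fixes v :: "'i \<Rightarrow> 'k::comm_ring_1"
  assumes "finite (supp v)"
  shows "linext f (\<lambda>i. c * v i) = (\<lambda>j. c * linext f (v :: 'i \<Rightarrow> 'k::comm_ring_1) j)"
proof
  fix j
  have "linext f (\<lambda>i. c * v i) j = (\<Sum>i\<in>supp v. (c * v i) * f i j)"
    using assms by (intro linext_sum) (auto simp: supp_def)
  also have "\<dots> = c * linext f v j" by (simp add: linext_def sum_distrib_left mult.assoc)
  finally show "linext f (\<lambda>i. c * v i) j = c * linext f v j" .
qed

lemma lin_on_linext: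
  fixes f :: "'i \<Rightarrow> 'j \<Rightarrow> 'k::comm_ring_1"
  assumes "\<And>i. i \<in> C \<Longrightarrow> f i \<in> fvec D"
  shows "lin_on (fvec C) (fvec D) (linext f)"
  unfolding lin_on_def
proof (intro conjI ballI allI)
  fix v :: "'i \<Rightarrow> 'k" assume v: "v \<in> fvec C"
  have "supp (linext f v) \<subseteq> (\<Union>i\<in>supp v. supp (f i))" by (rule supp_linext)
  also have "\<dots> \<subseteq> D" using v assms by (auto simp: fvec_def)
  finally show "linext f v \<in> fvec D"
    using v assms by (auto simp: fvec_def intro!: finite_supp_linext)
next
  fix u v :: "'i \<Rightarrow> 'k" assume "u \<in> fvec C" "v \<in> fvec C"
  then show "linext f (\<lambda>i. u i + v i) = (\<lambda>j. linext f u j + linext f v j)"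
    by (intro linext_add) (auto simp: fvec_def)
next
  fix c :: 'k and v :: "'i \<Rightarrow> 'k" assume "v \<in> fvec C"
  then show "linext f (\<lambda>i. c * v i) = (\<lambda>j. c * linext f v j)"
    by (intro linext_smult) (auto simp: fvec_def)
qed

lemma supp_sum_fun: "supp (\<lambda>p. \<Sum>x\<in>X. g x p) \<subseteq> (\<Union>x\<in>X. supp (g x))"
proof
  fix p assume "p \<in> supp (\<lambda>p. \<Sum>x\<in>X. g x p)"
  then have "(\<Sum>x\<in>X. g x p) \<noteq> 0" by (simp add: supp_def)
  then obtain x where "x \<in> X" "g x p \<noteq> 0" by (rule sum.not_neutral_contains_not_neutral)
  then show "p \<in> (\<Union>x\<in>X. supp (g x))" by (auto simp: supp_def)
qed

lemma linext_sum_vec: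
  fixes g :: "_ \<Rightarrow> _ \<Rightarrow> 'k::comm_ring_1"
  assumes "finite X" "\<And>x. x \<in> X \<Longrightarrow> finite (supp (g x))"
  shows "linext f (\<lambda>p. \<Sum>x\<in>X. g x p) = (\<lambda>q. \<Sum>x\<in>X. linext f (g x) q)"
  using assms
proof (induction X rule: finite_induct)
  case empty
  then show ?case by (simp add: linext_def supp_def)
next
  case (insert x X)
  have f1: "finite (supp (\<lambda>p. \<Sum>y\<in>X. g y p))"
    using insert by (intro finite_subset[OF supp_sum_fun]) auto
  have "linext f (\<lambda>p. \<Sum>y\<in>insert x X. g y p) = linext f (\<lambda>p. g x p + (\<Sum>y\<in>X. g y p))"
    using insert by simp
  also have "\<dots> = (\<lambda>q. linext f (g x) q + linext f (\<lambda>p. \<Sum>x\<in>X. g x p) q)"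
    using linext_add[OF _ f1, of "g x" f] insert by simp
  also have "\<dots> = (\<lambda>q. \<Sum>y\<in>insert x X. linext f (g y) q)" using insert by simp
  finally show ?case .
qed

lemma linext_sumbas:
  assumes "finite X"
  shows "linext f (\<lambda>p. \<Sum>x\<in>X. c x * bas (h x) p) = (\<lambda>q. \<Sum>x\<in>X. c x * f (h x) q)"
proof -
  have "linext f (\<lambda>p. \<Sum>x\<in>X. c x * bas (h x) p) = (\<lambda>q. \<Sum>x\<in>X. linext f (\<lambda>p. c x * bas (h x) p) q)"
    by (rule linext_sum_vec[OF assms]) (auto simp: supp_def bas_def)
  also have "\<dots> = (\<lambda>q. \<Sum>x\<in>X. c x * f (h x) q)"
    by (simp add: linext_smult)
  finally show ?thesis .
qed

lemma linext_sumbas1: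
  assumes "finite X"
  shows "linext f (\<lambda>p. \<Sum>x\<in>X. bas (h x) p) = (\<lambda>q. \<Sum>x\<in>X. f (h x) q)"
  using linext_sumbas[OF assms, where c="\<lambda>_. 1" and f=f and h=h] by simp

lemma linext_zero[simp]: "linext f (\<lambda>_. 0) = (\<lambda>_. 0)"
  by (simp add: linext_def supp_def)

lemma tens_bas_bas[simp]: "tens (bas i) (bas j) = (bas (i,j) :: _ \<Rightarrow> 'k::comm_ring_1)"
  by (auto simp: tens_def bas_def intro!: ext)

lemma tens_zero_l[simp]: "tens (\<lambda>_. 0) v = (\<lambda>_. 0)"
  by (auto simp: tens_def intro!: ext)

lemma tens_sbas_l: "tens (\<lambda>i. c * bas a i) (bas b) = (\<lambda>q. c * bas (a,b) q)"
  by (auto simp: tens_def bas_def intro!: ext)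
lemma tens_sbas_r: "tens (bas a) (\<lambda>i. c * bas b i) = (\<lambda>q. c * bas (a,b) q)"
  by (auto simp: tens_def bas_def intro!: ext)

lemma tens_sum_l: "tens (\<lambda>p. \<Sum>x\<in>X. bas (h x) p) (bas b) = (\<lambda>q. \<Sum>x\<in>X. bas (h x, b) q)"
  by (auto simp: tens_def bas_def sum_distrib_right intro!: ext sum.cong)

lemma tens_sum_r: "tens (bas a) (\<lambda>p. \<Sum>x\<in>X. bas (h x) p) = (\<lambda>q. \<Sum>x\<in>X. bas (a, h x) q)"
  by (auto simp: tens_def bas_def sum_distrib_left intro!: ext sum.cong)

lemma supp_tens: "supp (tens u v) \<subseteq> supp u \<times> supp v"
  by (auto simp: supp_def tens_def)

lemma finite_supp_tens: "finite (supp u) \<Longrightarrow> finite (supp v) \<Longrightarrow> finite (supp (tens u v))"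
  by (rule finite_subset[OF supp_tens]) auto

lemma tens_bas_left:
  fixes v :: "'b \<Rightarrow> 'k::comm_ring_1" and e :: 'a
  assumes "finite (supp v)"
  shows "tens (bas e) v = linext (\<lambda>j. bas (e,j)) (v :: _ \<Rightarrow> 'k::comm_ring_1)"
proof
  fix q :: "'a \<times> 'b" obtain i j where q: "q = (i,j)" by force
  have "linext (\<lambda>j. bas (e,j)) v q = (\<Sum>j'\<in>supp v. if j' = j then (if i = e then v j else 0) else 0)"
    unfolding linext_def q by (intro sum.cong) (auto simp: bas_def)
  also have "\<dots> = tens (bas e) v q"
    using assms by (auto simp: q tens_def bas_def supp_def)
  finally show "tens (bas e) v q = linext (\<lambda>j. bas (e,j)) v q" ..
qed

lemma tens_bas_right:
  fixes v :: "'b \<Rightarrow> 'k::comm_ring_1" and e :: 'a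
  assumes "finite (supp v)"
  shows "tens v (bas e) = linext (\<lambda>j. bas (j,e)) (v :: _ \<Rightarrow> 'k::comm_ring_1)"
proof
  fix q :: "'b \<times> 'a" obtain i j where q: "q = (i,j)" by force
  have "linext (\<lambda>j. bas (j,e)) v q = (\<Sum>j'\<in>supp v. if j' = i then (if j = e then v i else 0) else 0)"
    unfolding linext_def q by (intro sum.cong) (auto simp: bas_def)
  also have "\<dots> = tens v (bas e) q"
    using assms by (auto simp: q tens_def bas_def supp_def)
  finally show "tens v (bas e) q = linext (\<lambda>j. bas (j,e)) v q" ..
qed

lemma assoc_l_linext:
  fixes t :: "'a \<times> 'b \<times> 'c \<Rightarrow> 'k::comm_ring_1"
  assumes "finite (supp t)"
  shows "assoc_l t = linext (\<lambda>(x,y,z). bas ((x,y),z)) (t :: _ \<Rightarrow> 'k::comm_ring_1)"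
proof
  fix q :: "('a \<times> 'b) \<times> 'c" obtain x y z where q: "q = ((x,y),z)" by (metis prod.collapse)
  have "linext (\<lambda>(x,y,z). bas ((x,y),z)) t q = (\<Sum>p\<in>supp t. if p = (x,y,z) then t (x,y,z) else 0)"
    unfolding linext_def q by (intro sum.cong) (auto simp: bas_def split: prod.splits)
  also have "\<dots> = assoc_l t q"
    using assms by (auto simp: q assoc_l_def supp_def)
  finally show "assoc_l t q = linext (\<lambda>(x,y,z). bas ((x,y),z)) t q" ..
qed

lemma assoc_r_linext: "assoc_r (linext f v) = linext (\<lambda>i. assoc_r (f i)) v"
  by (auto simp: assoc_r_def linext_def intro!: ext)

lemma assoc_r_sumbas: "assoc_r (\<lambda>p. \<Sum>x\<in>X. bas ((a x, b x), c x) p) = (\<lambda>q. \<Sum>x\<in>X. bas (a x, b x, c x) q)"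
  by (auto simp: assoc_r_def bas_def intro!: ext sum.cong)

lemma eps_as_linext: "(\<Sum>I\<in>supp v. v I * d I) = linext (\<lambda>I (u::unit). d I) v ()"
  by (simp add: linext_def)

primrec Mlf :: "nat \<Rightarrow> 'a::order \<Rightarrow> 'a \<Rightarrow> 'k::field" where
  "Mlf 0 a b = 0"
| "Mlf (Suc n) a b = (if a = b then 1 else - (\<Sum>x\<in>{a..<b}. Mlf n a x))"

primrec Mrf :: "nat \<Rightarrow> 'a::order \<Rightarrow> 'a \<Rightarrow> 'k::field" where
  "Mrf 0 a b = 0"
| "Mrf (Suc n) a b = (if a = b then 1 else - (\<Sum>x\<in>{a<..b}. Mrf n x b))"

definition muL :: "'a::order \<Rightarrow> 'a \<Rightarrow> 'k::field" where
  "muL a b = Mlf (card {a..b}) a b"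
definition muR :: "'a::order \<Rightarrow> 'a \<Rightarrow> 'k::field" where
  "muR a b = Mrf (card {a..b}) a b"

locale setting =
  fixes R :: "(('a::order \<times> 'a) \<times> ('a \<times> 'a)) set"
  assumes lf: "locally_finite TYPE('a)" and bc: "bialg_compatible R"
begin

lemma fin[simp]: "finite {a..b::'a}"
  using lf by (simp add: locally_finite_def)

lemma eqv: "equiv ipairs R" using bc by (simp add: bialg_compatible_def)

lemma R_ip: "(p,q) \<in> R \<Longrightarrow> p \<in> ipairs \<and> q \<in> ipairs"
  using eqv by (auto simp: equiv_def refl_on_def)

lemma R_le: "((a,b),(c,d)) \<in> R \<Longrightarrow> a \<le> b \<and> c \<le> d"
  using R_ip by (auto simp: ipairs_def)

lemma R_refl: "a \<le> b \<Longrightarrow> ((a,b),(a,b)) \<in> R"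
  using eqv by (auto simp: equiv_def refl_on_def ipairs_def)

lemma R_sym: "(p,q) \<in> R \<Longrightarrow> (q,p) \<in> R"
  using eqv by (meson equivE symD)

lemma R_trans: "(p,q) \<in> R \<Longrightarrow> (q,r) \<in> R \<Longrightarrow> (p,r) \<in> R"
  using eqv unfolding equiv_def trans_def by blast

lemma R_deg: "((a,a),(b,b)) \<in> R" using bc by (simp add: bialg_compatible_def)

lemma R_comp: "((a,b),(a',b')) \<in> R \<Longrightarrow> ((b,c),(b',c')) \<in> R \<Longrightarrow> ((a,c),(a',c')) \<in> R"
  using bc unfolding bialg_compatible_def by blast

lemma R_bij: "((a,b),(a',b')) \<in> R \<Longrightarrow> \<exists>f. bij_betw f {a..b} {a'..b'} \<and>
             (\<forall>x\<in>{a..b}. ((a,x),(a',f x)) \<in> R \<and> ((x,b),(f x,b')) \<in> R)"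
  using bc unfolding bialg_compatible_def by blast

lemma cls_eq: "(p,q) \<in> R \<Longrightarrow> R `` {p} = R `` {q}"
  using eqv by (rule equiv_class_eq)

lemma cls_eqI: "((a,b),(c,d)) \<in> R \<Longrightarrow> cls R a b = cls R c d"
  unfolding cls_def by (rule cls_eq)

lemma cls_eqD: "a \<le> b \<Longrightarrow> cls R a b = cls R c d \<Longrightarrow> ((a,b),(c,d)) \<in> R"
proof -
  assume "a \<le> b" "cls R a b = cls R c d"
  then have "(a,b) \<in> cls R c d" using R_refl by (auto simp: cls_def)
  then show ?thesis by (auto simp: cls_def intro: R_sym)
qed

lemma cls_in: "a \<le> b \<Longrightarrow> cls R a b \<in> classes R"
  unfolding cls_def classes_def by (rule quotientI) (simp add: ipairs_def)

lemma classesE: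
  assumes "I \<in> classes R" obtains a b where "a \<le> b" "I = cls R a b"
  using assms unfolding classes_def cls_def ipairs_def by (auto elim!: quotientE)

lemma rep_in: "I \<in> classes R \<Longrightarrow> rep I \<in> I"
  unfolding rep_def by (rule someI_ex) (metis classesE R_refl cls_def Image_singleton_iff)

lemma rep_cls: "a \<le> b \<Longrightarrow> rep (cls R a b) = (a',b') \<Longrightarrow> ((a,b),(a',b')) \<in> R"
  using rep_in[OF cls_in, of a b] by (auto simp: cls_def)

lemma rep_clsE:
  assumes "a \<le> b" obtains a' b' where "rep (cls R a b) = (a',b')" "((a,b),(a',b')) \<in> R"
  using rep_cls[OF assms] by (metis prod.collapse)

lemma deg: "((a,a),(c,d)) \<in> R \<Longrightarrow> c = d"
proof -
  assume r: "((a,a),(c,d)) \<in> R"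
  then obtain f where f: "bij_betw f {a..a} {c..d}" using R_bij by blast
  have "c \<le> d" using R_le[OF r] by simp
  have "{c..d} = f ` {a}" using f by (simp add: bij_betw_def)
  then show "c = d" using \<open>c \<le> d\<close> by (metis atLeastAtMost_iff empty_iff insert_iff image_insert image_empty order_refl)
qed

lemma deg': "((c,d),(a,a)) \<in> R \<Longrightarrow> c = d"
  using deg R_sym by blast

lemma bij_ends:
  assumes r: "((a,b),(a',b')) \<in> R"
  obtains f where "bij_betw f {a..b} {a'..b'}"
    "\<And>x. x \<in> {a..b} \<Longrightarrow> ((a,x),(a',f x)) \<in> R \<and> ((x,b),(f x,b')) \<in> R"
    "f a = a'" "f b = b'"
proof -
  obtain f where f: "bij_betw f {a..b} {a'..b'}"
    "\<And>x. x \<in> {a..b} \<Longrightarrow> ((a,x),(a',f x)) \<in> R \<and> ((x,b),(f x,b')) \<in> R"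
    using R_bij[OF r] by blast
  have ab: "a \<le> b" using R_le[OF r] by simp
  have "((a,a),(a',f a)) \<in> R" using f(2)[of a] ab by simp
  then have "f a = a'" using deg by metis
  moreover have "((b,b),(f b,b')) \<in> R" using f(2)[of b] ab by simp
  then have "f b = b'" using deg by metis
  ultimately show ?thesis using f that by blast
qed

lemma card_R: "((a,b),(a',b')) \<in> R \<Longrightarrow> card {a..b} = card {a'..b'}"
  by (metis bij_betw_same_card bij_ends)

lemma card_less: "a \<le> x \<Longrightarrow> x < b \<Longrightarrow> card {a..x} < card {a..(b::'a)}"
proof (rule psubset_card_mono)
  assume "a \<le> x" "x < b"
  then have "{a..x} \<subseteq> {a..b}" "b \<notin> {a..x}" "b \<in> {a..b}"
    by (auto intro: order.trans[OF _ less_imp_le])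
  then show "{a..x} \<subset> {a..b}" by blast
qed simp

lemma card_less': "a < x \<Longrightarrow> x \<le> b \<Longrightarrow> card {x..b} < card {a..(b::'a)}"
proof (rule psubset_card_mono)
  assume "a < x" "x \<le> b"
  then have "{x..b} \<subseteq> {a..b}" "a \<notin> {x..b}" "a \<in> {a..b}"
    by (auto intro: order.trans[OF less_imp_le])
  then show "{x..b} \<subset> {a..b}" by blast
qed simp

lemma card_pos: "a \<le> b \<Longrightarrow> card {a..(b::'a)} > 0"
  by (auto simp: card_gt_0_iff)

end

context setting begin

lemma Mlf_stable:
  "a \<le> (b::'a) \<Longrightarrow> card {a..b} \<le> n \<Longrightarrow> card {a..b} \<le> m \<Longrightarrow> (Mlf n a b :: 'k::field) = Mlf m a b"
proof (induction n arbitrary: m a b)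
  case 0 then show ?case using card_pos[of a b] by simp
next
  case (Suc n)
  obtain m' where m: "m = Suc m'" using Suc.prems card_pos[of a b] by (cases m) auto
  have "(\<Sum>x\<in>{a..<b}. (Mlf n a x :: 'k)) = (\<Sum>x\<in>{a..<b}. Mlf m' a x)"
  proof (rule sum.cong[OF refl])
    fix x assume x: "x \<in> {a..<b}"
    then have "card {a..x} < card {a..b}" by (intro card_less) auto
    then show "(Mlf n a x :: 'k) = Mlf m' a x"
      using Suc x m by (intro Suc.IH) auto
  qed
  then show ?case by (simp add: m)
qed

lemma Mrf_stable:
  "a \<le> (b::'a) \<Longrightarrow> card {a..b} \<le> n \<Longrightarrow> card {a..b} \<le> m \<Longrightarrow> (Mrf n a b :: 'k::field) = Mrf m a b"
proof (induction n arbitrary: m a b)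
  case 0 then show ?case using card_pos[of a b] by simp
next
  case (Suc n)
  obtain m' where m: "m = Suc m'" using Suc.prems card_pos[of a b] by (cases m) auto
  have "(\<Sum>x\<in>{a<..b}. (Mrf n x b :: 'k)) = (\<Sum>x\<in>{a<..b}. Mrf m' x b)"
  proof (rule sum.cong[OF refl])
    fix x assume x: "x \<in> {a<..b}"
    then have "card {x..b} < card {a..b}" by (intro card_less') auto
    then show "(Mrf n x b :: 'k) = Mrf m' x b"
      using Suc x m by (intro Suc.IH) auto
  qed
  then show ?case by (simp add: m)
qed

lemma muL_rec: "a \<le> (b::'a) \<Longrightarrow> (muL a b :: 'k::field) = (if a = b then 1 else - (\<Sum>x\<in>{a..<b}. muL a x))"
proof -
  assume ab: "a \<le> b"
  obtain k where k: "card {a..b} = Suc k" using card_pos[OF ab] by (cases "card {a..b}") auto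
  have "(\<Sum>x\<in>{a..<b}. (Mlf k a x :: 'k)) = (\<Sum>x\<in>{a..<b}. muL a x)"
  proof (rule sum.cong[OF refl])
    fix x assume x: "x \<in> {a..<b}"
    then have "card {a..x} < card {a..b}" by (intro card_less) auto
    then show "(Mlf k a x :: 'k) = muL a x" unfolding muL_def
      using x k by (intro Mlf_stable) auto
  qed
  then show ?thesis by (simp add: muL_def k)
qed

lemma muR_rec: "a \<le> (b::'a) \<Longrightarrow> (muR a b :: 'k::field) = (if a = b then 1 else - (\<Sum>x\<in>{a<..b}. muR x b))"
proof -
  assume ab: "a \<le> b"
  obtain k where k: "card {a..b} = Suc k" using card_pos[OF ab] by (cases "card {a..b}") auto
  have "(\<Sum>x\<in>{a<..b}. (Mrf k x b :: 'k)) = (\<Sum>x\<in>{a<..b}. muR x b)"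
  proof (rule sum.cong[OF refl])
    fix x assume x: "x \<in> {a<..b}"
    then have "card {x..b} < card {a..b}" by (intro card_less') auto
    then show "(Mrf k x b :: 'k) = muR x b" unfolding muR_def
      using x k by (intro Mrf_stable) auto
  qed
  then show ?thesis by (simp add: muR_def k)
qed

lemma fin2[simp]: "finite {a..<b::'a}" "finite {a<..b::'a}"
  by (rule finite_subset[OF _ fin[of a b]], auto)+

lemma muL_sum: "a \<le> (b::'a) \<Longrightarrow> (\<Sum>x\<in>{a..b}. (muL a x :: 'k::field)) = (if a = b then 1 else 0)"
proof -
  assume ab: "a \<le> b"
  have "{a..b} = insert b {a..<b}" using ab by auto
  then have "(\<Sum>x\<in>{a..b}. (muL a x :: 'k)) = muL a b + (\<Sum>x\<in>{a..<b}. muL a x)" by simp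
  then show ?thesis using muL_rec[OF ab] by auto
qed

lemma muR_sum: "a \<le> (b::'a) \<Longrightarrow> (\<Sum>x\<in>{a..b}. (muR x b :: 'k::field)) = (if a = b then 1 else 0)"
proof -
  assume ab: "a \<le> b"
  have "{a..b} = insert a {a<..b}" using ab by auto
  then have "(\<Sum>x\<in>{a..b}. (muR x b :: 'k)) = muR a b + (\<Sum>x\<in>{a<..b}. muR x b)" by simp
  then show ?thesis using muR_rec[OF ab] by auto
qed

lemma muL_muR: "a \<le> (b::'a) \<Longrightarrow> (muL a b :: 'k::field) = muR a b"
proof -
  assume ab: "a \<le> b"
  have "(muL a b :: 'k) = (\<Sum>x\<in>{a..b}. muL a x * (if x = b then 1 else 0))"
    using ab by (simp add: if_distrib cong: if_cong)
  also have "\<dots> = (\<Sum>x\<in>{a..b}. muL a x * (\<Sum>y\<in>{x..b}. muR y b))"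
    by (intro sum.cong refl) (simp add: muR_sum)
  also have "\<dots> = (\<Sum>x\<in>{a..b}. \<Sum>y\<in>{y\<in>{a..b}. x \<le> y}. muL a x * muR y b)"
    by (intro sum.cong refl) (auto simp: sum_distrib_left intro!: sum.cong)
  also have "\<dots> = (\<Sum>y\<in>{a..b}. \<Sum>x\<in>{x\<in>{a..b}. x \<le> y}. muL a x * muR y b)"
    by (rule sum.swap_restrict) auto
  also have "\<dots> = (\<Sum>y\<in>{a..b}. (\<Sum>x\<in>{a..y}. muL a x) * muR y b)"
    by (intro sum.cong refl) (auto simp: sum_distrib_right intro!: sum.cong)
  also have "\<dots> = (\<Sum>y\<in>{a..b}. (if a = y then 1 else 0) * muR y b)"
    by (intro sum.cong refl) (simp add: muL_sum)
  also have "\<dots> = (\<Sum>y\<in>{a..b}. if a = y then muR y b else 0)" by (intro sum.cong) auto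
  also have "\<dots> = muR a b" using ab by simp
  finally show ?thesis .
qed

lemma muL_inv: "((a,b),(a',b')) \<in> R \<Longrightarrow> (muL a b :: 'k::field) = muL a' b'"
proof (induction "card {a..b}" arbitrary: a b a' b' rule: less_induct)
  case less
  obtain f where f: "bij_betw f {a..b} {a'..b'}"
    "\<And>x. x \<in> {a..b} \<Longrightarrow> ((a,x),(a',f x)) \<in> R \<and> ((x,b),(f x,b')) \<in> R"
    "f a = a'" "f b = b'" using bij_ends[OF less.prems] by blast
  have ab: "a \<le> b" and ab': "a' \<le> b'" using R_le[OF less.prems] by auto
  show ?case
  proof (cases "a = b")
    case True
    then have "a' = b'" using deg less.prems by blast
    then show ?thesis using True ab ab' by (simp add: muL_rec)
  next
    case False
    then have F': "a' \<noteq> b'" using deg' less.prems by blast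
    have bf: "bij_betw f {a..<b} {a'..<b'}"
    proof -
      have "bij_betw f ({a..b} - {b}) ({a'..b'} - {b'})"
        using f ab ab' by (intro bij_betw_DiffI) (auto simp: bij_betw_def)
      moreover have "{a..b} - {b} = {a..<b}" "{a'..b'} - {b'} = {a'..<b'}" by auto
      ultimately show ?thesis by simp
    qed
    have "(\<Sum>x\<in>{a..<b}. (muL a x :: 'k)) = (\<Sum>x\<in>{a..<b}. muL a' (f x))"
    proof (rule sum.cong[OF refl])
      fix x assume x: "x \<in> {a..<b}"
      then have "card {a..x} < card {a..b}" by (intro card_less) auto
      then show "(muL a x :: 'k) = muL a' (f x)" using less.hyps f(2)[of x] x by auto
    qed
    also have "\<dots> = (\<Sum>y\<in>{a'..<b'}. muL a' y)" by (rule sum.reindex_bij_betw[OF bf])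
    finally show ?thesis using False F' ab ab' by (simp add: muL_rec)
  qed
qed

definition Phi :: "('a \<times> 'a) set \<Rightarrow> 'k::field" where
  "Phi I = (if I \<in> classes R then muL (fst (rep I)) (snd (rep I)) else 0)"

lemma Phi_cls: "a \<le> (b::'a) \<Longrightarrow> (Phi (cls R a b) :: 'k::field) = muL a b"
proof -
  assume ab: "a \<le> b"
  obtain a' b' where r: "rep (cls R a b) = (a',b')" "((a,b),(a',b')) \<in> R"
    using rep_clsE[OF ab] by blast
  have "(muL a b :: 'k) = muL a' b'" by (rule muL_inv[OF r(2)])
  then show ?thesis using r by (simp add: Phi_def cls_in[OF ab])
qed

lemma Phi_prop: "(\<forall>I. I \<notin> classes R \<longrightarrow> (Phi I :: 'k::field) = 0)
       \<and> (\<forall>I\<in>classes R. inc_conv R (Phi :: _ \<Rightarrow> 'k) zeta I = inc_unit I \<and> inc_conv R zeta (Phi :: _ \<Rightarrow> 'k) I = inc_unit I)"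
proof (intro conjI allI ballI impI)
  fix I :: "('a \<times> 'a) set" assume "I \<notin> classes R" then show "(Phi I :: 'k) = 0" by (simp add: Phi_def)
next
  fix I assume I: "I \<in> classes R"
  obtain a b where r: "rep I = (a,b)" by force
  have "(a,b) \<in> I" using rep_in[OF I] r by simp
  moreover obtain a' b' where "I = cls R a' b'" using I by (rule classesE)
  ultimately have "((a',b'),(a,b)) \<in> R" by (simp add: cls_def)
  then have ab: "a \<le> b" using R_le by blast
  have st: "{x. a \<le> x \<and> x \<le> b} = {a..b}" by auto
  have "(\<Sum>x\<in>{a..b}. (Phi (cls R a x) :: 'k)) = (\<Sum>x\<in>{a..b}. muL a x)"
    by (intro sum.cong refl) (auto simp: Phi_cls)
  then show "inc_conv R Phi zeta I = (inc_unit I :: 'k)"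
    unfolding inc_conv_def inc_unit_def delta_cls_def r zeta_def using ab
    by (simp add: st muL_sum)
  have "(\<Sum>x\<in>{a..b}. (Phi (cls R x b) :: 'k)) = (\<Sum>x\<in>{a..b}. muR x b)"
    by (intro sum.cong refl) (auto simp: Phi_cls muL_muR)
  then show "inc_conv R zeta Phi I = (inc_unit I :: 'k)"
    unfolding inc_conv_def inc_unit_def delta_cls_def r zeta_def using ab
    by (simp add: st muR_sum)
qed

lemma Phi_unique:
  assumes P: "(\<forall>I. I \<notin> classes R \<longrightarrow> (Psi I :: 'k::field) = 0)
       \<and> (\<forall>I\<in>classes R. inc_conv R Psi zeta I = inc_unit I \<and> inc_conv R zeta Psi I = inc_unit I)"
  shows "Psi = Phi"
proof -
  have main: "a \<le> (b::'a) \<Longrightarrow> Psi (cls R a b) = muL a b" for a b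
  proof (induction "card {a..b}" arbitrary: a b rule: less_induct)
    case less
    obtain a0 b0 where r: "rep (cls R a b) = (a0,b0)" "((a,b),(a0,b0)) \<in> R"
      using rep_clsE[OF less.prems] by blast
    have ab0: "a0 \<le> b0" using R_le[OF r(2)] by simp
    have ceq: "cls R a0 b0 = cls R a b" using cls_eqI[OF r(2)] by simp
    have cd: "card {a0..b0} = card {a..b}" using card_R[OF r(2)] by simp
    have st: "{x. a0 \<le> x \<and> x \<le> b0} = {a0..b0}" by auto
    have "inc_conv R Psi zeta (cls R a b) = inc_unit (cls R a b)"
      using P cls_in[OF less.prems] by blast
    then have eq: "(\<Sum>x\<in>{a0..b0}. Psi (cls R a0 x)) = (if a0 = b0 then 1 else 0)"
      unfolding inc_conv_def inc_unit_def delta_cls_def r zeta_def by (simp add: st)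
    have "{a0..b0} = insert b0 {a0..<b0}" using ab0 by auto
    then have eq2: "Psi (cls R a0 b0) + (\<Sum>x\<in>{a0..<b0}. Psi (cls R a0 x)) = (if a0 = b0 then 1 else 0)"
      using eq by simp
    have "(\<Sum>x\<in>{a0..<b0}. Psi (cls R a0 x)) = (\<Sum>x\<in>{a0..<b0}. muL a0 x)"
    proof (rule sum.cong[OF refl])
      fix x assume x: "x \<in> {a0..<b0}"
      then have "card {a0..x} < card {a..b}" using cd card_less[of a0 x b0] by simp
      then show "Psi (cls R a0 x) = muL a0 x" using less.hyps x by auto
    qed
    then have "Psi (cls R a0 b0) = (if a0 = b0 then 1 else 0) - (\<Sum>x\<in>{a0..<b0}. muL a0 x)"
      using eq2 by (simp add: eq_diff_eq)
    then have "Psi (cls R a0 b0) = muL a0 b0" using muL_rec[OF ab0, where 'k='k]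
      by (cases "a0 = b0") simp_all
    then show ?case using ceq muL_inv[OF r(2), where 'k='k] by simp
  qed
  show ?thesis
  proof
    fix I show "Psi I = Phi I"
    proof (cases "I \<in> classes R")
      case True
      then obtain a b where "a \<le> b" "I = cls R a b" by (rule classesE)
      then show ?thesis using main Phi_cls[where 'k='k] by simp
    next
      case False then show ?thesis using P by (simp add: Phi_def)
    qed
  qed
qed

lemma mobius_eq: "(mobius R :: _ \<Rightarrow> 'k::field) = Phi"
  unfolding mobius_def by (rule the_equality) (rule Phi_prop, erule Phi_unique)

lemma mob_sumL: "a \<le> (b::'a) \<Longrightarrow> (\<Sum>x\<in>{a..b}. (mobius R (cls R a x) :: 'k::field)) = (if a = b then 1 else 0)"
proof -
  assume ab: "a \<le> b"
  have "(\<Sum>x\<in>{a..b}. (mobius R (cls R a x) :: 'k)) = (\<Sum>x\<in>{a..b}. muL a x)"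
    by (intro sum.cong refl) (auto simp: mobius_eq Phi_cls)
  then show ?thesis using muL_sum[OF ab] by simp
qed

lemma mob_sumR: "a \<le> (b::'a) \<Longrightarrow> (\<Sum>x\<in>{a..b}. (mobius R (cls R x b) :: 'k::field)) = (if a = b then 1 else 0)"
proof -
  assume ab: "a \<le> b"
  have "(\<Sum>x\<in>{a..b}. (mobius R (cls R x b) :: 'k)) = (\<Sum>x\<in>{a..b}. muR x b)"
    by (intro sum.cong refl) (auto simp: mobius_eq Phi_cls muL_muR)
  then show ?thesis using muR_sum[OF ab] by simp
qed

end

definition hypN :: "(('a::order \<times> 'a) \<times> ('a \<times> 'a)) set \<Rightarrow> 'k::field itself \<Rightarrow> bool" where
  "hypN R T \<longleftrightarrow> (\<forall>a x b :: 'a. a \<le> x \<and> x \<le> b \<longrightarrow>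
           (nabla_L R (tens (bas (cls R a x)) (bas (cls R x b))) :: ('a \<times> 'a) set \<Rightarrow> 'k)
             = bas (cls R a b))"

lemma nab_bas: "nabla_L R (bas (I,J)) = (mul_b R I J :: _ \<Rightarrow> 'k::field)"
  by (simp add: nabla_L_def)

lemma D_bas: "delta_L R (bas I) = (comul_b R I :: _ \<Rightarrow> 'k::field)"
  by (simp add: delta_L_def)

lemma eps_lin: "eps_L R v = linext (\<lambda>I (u::unit). delta_cls I) v ()"
  by (simp add: eps_L_def linext_def)

lemma eps_bas: "eps_L R (bas I :: _ \<Rightarrow> 'k::field) = delta_cls I"
  by (simp add: eps_lin)

lemma bas_assoc: "bas ((A,B),C) ((P,Q),Z) = bas (A,B,C) (P,Q,Z)"
  by (simp add: bas_def)

lemma supp_sbas: "supp (\<lambda>q. (c::'k::field) * bas i q) \<subseteq> {i}"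
  by (auto simp: supp_def bas_def)

lemma fs_sumbas: "finite X \<Longrightarrow> finite (supp (\<lambda>q. \<Sum>x\<in>X. (c x :: 'k::field) * bas (h x) q))"
  by (rule finite_subset[OF supp_sum_fun], rule finite_UN_I, simp, rule finite_subset[OF supp_sbas], simp)

lemma fs_sumbas1: "finite X \<Longrightarrow> finite (supp (\<lambda>q. \<Sum>x\<in>X. (bas (h x) q :: 'k::field)))"
  using fs_sumbas[of X "\<lambda>_. (1::'k)" h] by simp

context setting begin

definition Ecl where "Ecl = cls R (SOME a. True) (SOME a. True)"

lemma E_eq: "cls R a a = Ecl"
  unfolding Ecl_def by (rule cls_eqI[OF R_deg])

lemma Ecl_in: "Ecl \<in> classes R"
  using cls_in[of a a for a] E_eq by (metis order_refl)

lemma eta_eq: "eta_L R r = (\<lambda>I. r * bas Ecl I)"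
  by (simp add: eta_L_def Ecl_def)

lemma eta1: "eta_L R 1 = bas Ecl"
  by (simp add: eta_eq)

lemma mul_F1:
  assumes H: "hypN R TYPE('k::field)" and "a \<le> x" "x \<le> b"
  shows "(mul_b R (cls R a x) (cls R x b) :: _ \<Rightarrow> 'k) = bas (cls R a b)"
proof -
  have "(nabla_L R (tens (bas (cls R a x)) (bas (cls R x b))) :: _ \<Rightarrow> 'k) = bas (cls R a b)"
    using H assms(2,3) unfolding hypN_def by blast
  then show ?thesis by (simp add: nab_bas)
qed

lemma mul_F2:
  "(mul_b R I J :: _ \<Rightarrow> 'k::field) = (\<lambda>_. 0) \<or> (\<exists>a x b. a \<le> x \<and> x \<le> b \<and> I = cls R a x \<and> J = cls R x b)"
  unfolding mul_b_def by auto

lemma mul_cases: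
  assumes H: "hypN R TYPE('k::field)"
  obtains "(mul_b R I J :: _ \<Rightarrow> 'k) = (\<lambda>_. 0)" "\<not> (\<exists>a x b. a \<le> x \<and> x \<le> b \<and> I = cls R a x \<and> J = cls R x b)"
  | a x b where "a \<le> x" "x \<le> b" "I = cls R a x" "J = cls R x b" "(mul_b R I J :: _ \<Rightarrow> 'k) = bas (cls R a b)"
proof (cases "\<exists>a x b. a \<le> x \<and> x \<le> b \<and> I = cls R a x \<and> J = cls R x b")
  case True
  then obtain a x b where c: "a \<le> x" "x \<le> b" "I = cls R a x" "J = cls R x b" by blast
  then have "(mul_b R I J :: _ \<Rightarrow> 'k) = bas (cls R a b)" using mul_F1[OF H, of a x b] by simp
  then show ?thesis using c that(2) by blast
next
  case False
  then have "(mul_b R I J :: _ \<Rightarrow> 'k) = (\<lambda>_. 0)" unfolding mul_b_def by (rule if_not_P)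
  then show ?thesis using False that(1) by blast
qed

lemma mul_in:
  assumes H: "hypN R TYPE('k::field)"
  shows "(mul_b R I J :: _ \<Rightarrow> 'k) \<in> fvec (classes R)"
proof (cases rule: mul_cases[OF H, of I J])
  case 1 then show ?thesis by (simp add: fvec_def supp_def)
next
  case (2 a x b)
  then have "a \<le> b" by (meson order.trans)
  then show ?thesis using 2 by (simp add: fvec_def cls_in)
qed

lemma comul_in: "(comul_b R I :: _ \<Rightarrow> 'k::field) \<in> fvec (classes R \<times> classes R)"
proof -
  obtain a b where r: "rep I = (a,b)" by force
  have "comul_b R I = (\<lambda>p. \<Sum>x\<in>{a..b}. (bas (cls R a x, cls R x b) p :: 'k))"
    by (simp add: comul_b_def r)
  moreover have "supp (\<lambda>p. \<Sum>x\<in>{a..b}. (bas (cls R a x, cls R x b) p :: 'k)) \<subseteq> classes R \<times> classes R"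
    using supp_sum_fun[of "\<lambda>x. bas (cls R a x, cls R x b)" "{a..b}"] by (auto simp: cls_in)
  ultimately show ?thesis using fs_sumbas1[of "{a..b}" "\<lambda>x. (cls R a x, cls R x b)"]
    by (simp add: fvec_def)
qed

lemma comul_cls:
  assumes ab: "a \<le> b"
  shows "(comul_b R (cls R a b) :: _ \<Rightarrow> 'k::field) = (\<lambda>p. \<Sum>x\<in>{a..b}. bas (cls R a x, cls R x b) p)"
proof -
  obtain a' b' where r: "rep (cls R a b) = (a',b')" "((a,b),(a',b')) \<in> R"
    using rep_clsE[OF ab] by blast
  obtain f where f: "bij_betw f {a..b} {a'..b'}"
    "\<And>x. x \<in> {a..b} \<Longrightarrow> ((a,x),(a',f x)) \<in> R \<and> ((x,b),(f x,b')) \<in> R"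
    using bij_ends[OF r(2)] by blast
  have "(comul_b R (cls R a b) :: _ \<Rightarrow> 'k) = (\<lambda>p. \<Sum>y\<in>{a'..b'}. bas (cls R a' y, cls R y b') p)"
    by (simp add: comul_b_def r)
  also have "\<dots> = (\<lambda>p. \<Sum>x\<in>{a..b}. bas (cls R a' (f x), cls R (f x) b') p)"
    by (rule ext, rule sum.reindex_bij_betw[OF f(1), symmetric])
  also have "\<dots> = (\<lambda>p. \<Sum>x\<in>{a..b}. bas (cls R a x, cls R x b) p)"
  proof (intro ext sum.cong refl)
    fix p x assume x: "x \<in> {a..b}"
    have "cls R a' (f x) = cls R a x" "cls R (f x) b' = cls R x b"
      using f(2)[OF x] cls_eqI R_sym by metis+
    then show "bas (cls R a' (f x), cls R (f x) b') p = bas (cls R a x, cls R x b) p" by simp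
  qed
  finally show ?thesis .
qed

lemma delta_cls_cls:
  assumes ab: "a \<le> b"
  shows "(delta_cls (cls R a b) :: 'k::field) = (if a = b then 1 else 0)"
proof -
  obtain a' b' where r: "rep (cls R a b) = (a',b')" "((a,b),(a',b')) \<in> R"
    using rep_clsE[OF ab] by blast
  have "a = b \<longleftrightarrow> a' = b'" using r(2) deg deg' by blast
  then show ?thesis by (simp add: delta_cls_def r)
qed

end

context setting begin

lemma nab_comp: "finite (supp v) \<Longrightarrow> (\<And>i. i \<in> supp v \<Longrightarrow> finite (supp (f i))) \<Longrightarrow>
  (nabla_L R (linext f v) :: _ \<Rightarrow> 'k::field) = linext (\<lambda>i. nabla_L R (f i)) v"
  unfolding nabla_L_def by (rule linext_comp)

lemma nab_zero[simp]: "nabla_L R (\<lambda>_. 0) = (\<lambda>_. (0::'k::field))"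
  by (simp add: nabla_L_def)

lemma assoc_basis:
  assumes H: "hypN R TYPE('k::field)"
  shows "(nabla_L R (tens (mul_b R I J) (bas K)) :: _ \<Rightarrow> 'k) = nabla_L R (tens (bas I) (mul_b R J K))"
proof (cases "\<exists>a x y b. a \<le> x \<and> x \<le> y \<and> y \<le> b \<and> I = cls R a x \<and> J = cls R x y \<and> K = cls R y b")
  case True
  then obtain a x y b where c: "a \<le> x" "x \<le> y" "y \<le> b" "I = cls R a x" "J = cls R x y" "K = cls R y b"
    by blast
  have ay: "a \<le> y" and xb: "x \<le> b" using c by (meson order.trans)+
  have "(nabla_L R (tens (mul_b R I J) (bas K)) :: _ \<Rightarrow> 'k) = bas (cls R a b)"
    using c ay by (simp add: mul_F1[OF H] nab_bas)
  moreover have "(nabla_L R (tens (bas I) (mul_b R J K)) :: _ \<Rightarrow> 'k) = bas (cls R a b)"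
    using c xb by (simp add: mul_F1[OF H] nab_bas)
  ultimately show ?thesis by simp
next
  case False
  have L: "(nabla_L R (tens (mul_b R I J) (bas K)) :: _ \<Rightarrow> 'k) = (\<lambda>_. 0)"
  proof (cases rule: mul_cases[OF H, of I J])
    case 1 then show ?thesis by simp
  next
    case (2 a x y)
    have ay: "a \<le> y" using 2 by (meson order.trans)
    have e: "(nabla_L R (tens (mul_b R I J) (bas K)) :: _ \<Rightarrow> 'k) = mul_b R (cls R a y) K"
      using 2 by (simp add: nab_bas)
    show ?thesis
    proof (cases rule: mul_cases[OF H, of "cls R a y" K])
      case 1 then show ?thesis using e by simp
    next
      case (2 a' y' b)
      have r: "((a,y),(a',y')) \<in> R" using cls_eqD[OF ay 2(3)] .
      obtain f where f: "\<And>z. z \<in> {a..y} \<Longrightarrow> ((a,z),(a',f z)) \<in> R \<and> ((z,y),(f z,y')) \<in> R"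
        using bij_ends[OF r] by blast
      have xin: "x \<in> {a..y}" using \<open>a \<le> x\<close> \<open>x \<le> y\<close> by simp
      have r1: "((a,x),(a',f x)) \<in> R" and r2: "((x,y),(f x,y')) \<in> R" using f[OF xin] by auto
      have "a' \<le> f x" "f x \<le> y'" using R_le[OF r1] R_le[OF r2] by auto
      moreover have "I = cls R a' (f x)" "J = cls R (f x) y'"
        using cls_eqI[OF r1] cls_eqI[OF r2] \<open>I = cls R a x\<close> \<open>J = cls R x y\<close> by auto
      ultimately have False using False 2 by blast
      then show ?thesis ..
    qed
  qed
  have Rt: "(nabla_L R (tens (bas I) (mul_b R J K)) :: _ \<Rightarrow> 'k) = (\<lambda>_. 0)"
  proof (cases rule: mul_cases[OF H, of J K])
    case 1
    show ?thesis using 1 by (simp add: tens_def nabla_L_def linext_def supp_def)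
  next
    case (2 x y b)
    have xb: "x \<le> b" using 2 by (meson order.trans)
    have e: "(nabla_L R (tens (bas I) (mul_b R J K)) :: _ \<Rightarrow> 'k) = mul_b R I (cls R x b)"
      using 2 by (simp add: nab_bas)
    show ?thesis
    proof (cases rule: mul_cases[OF H, of I "cls R x b"])
      case 1 then show ?thesis using e by simp
    next
      case (2 a' x' b')
      have r: "((x,b),(x',b')) \<in> R" using cls_eqD[OF xb 2(4)] .
      obtain f where f: "\<And>z. z \<in> {x..b} \<Longrightarrow> ((x,z),(x',f z)) \<in> R \<and> ((z,b),(f z,b')) \<in> R"
        using bij_ends[OF r] by blast
      have yin: "y \<in> {x..b}" using \<open>x \<le> y\<close> \<open>y \<le> b\<close> by simp
      have r1: "((x,y),(x',f y)) \<in> R" and r2: "((y,b),(f y,b')) \<in> R" using f[OF yin] by auto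
      have "x' \<le> f y" "f y \<le> b'" using R_le[OF r1] R_le[OF r2] by auto
      moreover have "J = cls R x' (f y)" "K = cls R (f y) b'"
        using cls_eqI[OF r1] cls_eqI[OF r2] \<open>J = cls R x y\<close> \<open>K = cls R y b\<close> by auto
      ultimately have False using False 2 by blast
      then show ?thesis ..
    qed
  qed
  show ?thesis using L Rt by simp
qed

lemma fs_mul: "hypN R TYPE('k::field) \<Longrightarrow> finite (supp (mul_b R I J :: _ \<Rightarrow> 'k))"
  using mul_in by (auto simp: fvec_def)

lemma assoc_full:
  assumes H: "hypN R TYPE('k::field)" and t: "t \<in> fvec (classes R \<times> classes R \<times> classes R)"
  shows "(nabla_L R (tmap (nabla_L R) id (assoc_l t)) :: _ \<Rightarrow> 'k) = nabla_L R (tmap id (nabla_L R) t)"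
proof -
  have ft: "finite (supp t)" using t by (simp add: fvec_def)
  have "tmap (nabla_L R) id (assoc_l t) = linext (\<lambda>p. tmap (nabla_L R) id ((\<lambda>(x,y,z). bas ((x,y),z)) p)) t"
    unfolding assoc_l_linext[OF ft] tmap_def by (rule linext_comp[OF ft]) (auto split: prod.splits)
  also have "\<dots> = linext (\<lambda>(I,J,K). tens (mul_b R I J) (bas K)) t"
    by (rule linext_cong) (auto simp: tmap_def nab_bas split: prod.splits)
  finally have L: "(nabla_L R (tmap (nabla_L R) id (assoc_l t)) :: _ \<Rightarrow> 'k)
      = linext (\<lambda>p. nabla_L R ((\<lambda>(I,J,K). tens (mul_b R I J) (bas K)) p)) t"
    using ft by (simp add: nab_comp fs_mul[OF H] finite_supp_tens split: prod.splits)
  have "tmap id (nabla_L R) t = linext (\<lambda>(I,J,K). tens (bas I) (mul_b R J K :: _ \<Rightarrow> 'k)) t"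
    unfolding tmap_def by (rule linext_cong) (auto simp: nab_bas split: prod.splits)
  then have Rt: "(nabla_L R (tmap id (nabla_L R) t) :: _ \<Rightarrow> 'k)
      = linext (\<lambda>p. nabla_L R ((\<lambda>(I,J,K). tens (bas I) (mul_b R J K :: _ \<Rightarrow> 'k)) p)) t"
    using ft by (simp add: nab_comp fs_mul[OF H] finite_supp_tens split: prod.splits)
  show ?thesis unfolding L Rt
    by (rule linext_cong) (auto simp: assoc_basis[OF H] split: prod.splits)
qed

lemma unit_l:
  assumes H: "hypN R TYPE('k::field)" and v: "v \<in> fvec (classes R)"
  shows "nabla_L R (tens (eta_L R 1) v) = (v :: _ \<Rightarrow> 'k)"
proof -
  have fv: "finite (supp v)" using v by (simp add: fvec_def)
  have "nabla_L R (tens (eta_L R 1) v) = nabla_L R (linext (\<lambda>J. bas (Ecl,J)) v)"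
    by (simp add: eta1 tens_bas_left[OF fv])
  also have "\<dots> = linext (\<lambda>J. nabla_L R (bas (Ecl,J))) v"
    using fv by (simp add: nab_comp)
  also have "\<dots> = linext bas v"
  proof (rule linext_cong)
    fix J assume "J \<in> supp v"
    then have "J \<in> classes R" using v by (auto simp: fvec_def)
    then obtain a b where ab: "a \<le> b" "J = cls R a b" by (rule classesE)
    show "(nabla_L R (bas (Ecl,J)) :: _ \<Rightarrow> 'k) = bas J"
      using ab mul_F1[OF H, of a a b] by (simp add: nab_bas E_eq[symmetric, of a])
  qed
  also have "\<dots> = v" by (rule linext_bas_id[OF fv])
  finally show ?thesis .
qed

lemma unit_r:
  assumes H: "hypN R TYPE('k::field)" and v: "v \<in> fvec (classes R)"
  shows "nabla_L R (tens v (eta_L R 1)) = (v :: _ \<Rightarrow> 'k)"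
proof -
  have fv: "finite (supp v)" using v by (simp add: fvec_def)
  have "nabla_L R (tens v (eta_L R 1)) = nabla_L R (linext (\<lambda>J. bas (J,Ecl)) v)"
    by (simp add: eta1 tens_bas_right[OF fv])
  also have "\<dots> = linext (\<lambda>J. nabla_L R (bas (J,Ecl))) v"
    using fv by (simp add: nab_comp)
  also have "\<dots> = linext bas v"
  proof (rule linext_cong)
    fix J assume "J \<in> supp v"
    then have "J \<in> classes R" using v by (auto simp: fvec_def)
    then obtain a b where ab: "a \<le> b" "J = cls R a b" by (rule classesE)
    show "(nabla_L R (bas (J,Ecl)) :: _ \<Rightarrow> 'k) = bas J"
      using ab mul_F1[OF H, of a b b] by (simp add: nab_bas E_eq[symmetric, of b])
  qed
  also have "\<dots> = v" by (rule linext_bas_id[OF fv])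
  finally show ?thesis .
qed

lemma swap_tri:
  assumes "a \<le> (b::'a)"
  shows "(\<Sum>x\<in>{a..b}. \<Sum>y\<in>{a..x}. F y x) = (\<Sum>y\<in>{a..b}. \<Sum>x\<in>{y..b}. (F y x :: 'k::comm_ring_1))"
proof -
  have "(\<Sum>x\<in>{a..b}. \<Sum>y\<in>{a..x}. F y x) = (\<Sum>x\<in>{a..b}. \<Sum>y\<in>{y\<in>{a..b}. y \<le> x}. F y x)"
    by (intro sum.cong refl) (auto intro: order.trans)
  also have "\<dots> = (\<Sum>y\<in>{a..b}. \<Sum>x\<in>{x\<in>{a..b}. y \<le> x}. F y x)"
    by (rule sum.swap_restrict) auto
  also have "\<dots> = (\<Sum>y\<in>{a..b}. \<Sum>x\<in>{y..b}. F y x)"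
    by (intro sum.cong refl) (auto intro: order.trans)
  finally show ?thesis .
qed

lemma fs_comul: "finite (supp (comul_b R I :: _ \<Rightarrow> 'k::field))"
  using comul_in by (auto simp: fvec_def)

lemma D_lin: "finite (supp v) \<Longrightarrow> (\<And>i. i \<in> supp v \<Longrightarrow> finite (supp (f i))) \<Longrightarrow>
    tmap F G (linext f v) = linext (\<lambda>i. tmap F G (f i)) v"
  unfolding tmap_def by (rule linext_comp)

lemma coassoc_basis:
  assumes ab: "a \<le> b"
  shows "assoc_r (tmap (delta_L R) id (comul_b R (cls R a b))) = (tmap id (delta_L R) (comul_b R (cls R a b)) :: _ \<Rightarrow> 'k::field)"
proof -
  have "(tmap (delta_L R) id (comul_b R (cls R a b)) :: _ \<Rightarrow> 'k) =
     (\<lambda>q. \<Sum>x\<in>{a..b}. tens (comul_b R (cls R a x)) (bas (cls R x b)) q)"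
    unfolding comul_cls[OF ab] tmap_def by (simp add: linext_sumbas1 D_bas)
  also have "\<dots> = (\<lambda>q. \<Sum>x\<in>{a..b}. \<Sum>y\<in>{a..x}. bas ((cls R a y, cls R y x), cls R x b) q)"
    by (intro ext sum.cong refl) (simp add: comul_cls tens_sum_l)
  finally have L: "assoc_r (tmap (delta_L R) id (comul_b R (cls R a b))) =
     (\<lambda>q. \<Sum>x\<in>{a..b}. \<Sum>y\<in>{a..x}. (bas (cls R a y, cls R y x, cls R x b) q :: 'k))"
    by (auto simp: assoc_r_def bas_assoc intro!: ext)
  have "(tmap id (delta_L R) (comul_b R (cls R a b)) :: _ \<Rightarrow> 'k) =
     (\<lambda>q. \<Sum>y\<in>{a..b}. tens (bas (cls R a y)) (comul_b R (cls R y b)) q)"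
    unfolding comul_cls[OF ab] tmap_def by (simp add: linext_sumbas1 D_bas)
  also have "\<dots> = (\<lambda>q. \<Sum>y\<in>{a..b}. \<Sum>x\<in>{y..b}. bas (cls R a y, cls R y x, cls R x b) q)"
    by (intro ext sum.cong refl) (simp add: comul_cls tens_sum_r)
  finally have Rt: "(tmap id (delta_L R) (comul_b R (cls R a b)) :: _ \<Rightarrow> 'k) =
     (\<lambda>q. \<Sum>y\<in>{a..b}. \<Sum>x\<in>{y..b}. bas (cls R a y, cls R y x, cls R x b) q)" .
  show ?thesis unfolding L Rt by (rule ext, rule swap_tri[OF ab])
qed

lemma coassoc_full:
  assumes v: "v \<in> fvec (classes R)"
  shows "assoc_r (tmap (delta_L R) id (delta_L R v)) = (tmap id (delta_L R) (delta_L R v) :: _ \<Rightarrow> 'k::field)"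
proof -
  have fv: "finite (supp v)" using v by (simp add: fvec_def)
  have dv: "delta_L R v = linext (comul_b R) v" by (simp add: delta_L_def)
  have "tmap (delta_L R) id (delta_L R v) = linext (\<lambda>I. tmap (delta_L R) id (comul_b R I :: _ \<Rightarrow> 'k)) v"
    unfolding dv by (rule D_lin[OF fv], rule fs_comul)
  then have "assoc_r (tmap (delta_L R) id (delta_L R v)) = linext (\<lambda>I. assoc_r (tmap (delta_L R) id (comul_b R I :: _ \<Rightarrow> 'k))) v"
    by (simp add: assoc_r_linext)
  also have "\<dots> = linext (\<lambda>I. tmap id (delta_L R) (comul_b R I :: _ \<Rightarrow> 'k)) v"
  proof (rule linext_cong)
    fix I assume "I \<in> supp v"
    then have "I \<in> classes R" using v by (auto simp: fvec_def)
    then obtain a b where ab: "a \<le> b" "I = cls R a b" by (rule classesE)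
    then show "assoc_r (tmap (delta_L R) id (comul_b R I :: _ \<Rightarrow> 'k)) = tmap id (delta_L R) (comul_b R I)"
      using coassoc_basis by simp
  qed
  also have "\<dots> = tmap id (delta_L R) (delta_L R v)"
    unfolding dv by (rule D_lin[OF fv, symmetric], rule fs_comul)
  finally show ?thesis .
qed

end

context setting begin

lemma dv: "delta_L R v = linext (comul_b R) v" by (simp add: delta_L_def)

lemma counit_basis_l:
  assumes ab: "a \<le> b"
  shows "linext (\<lambda>(i,j) k. eps_L R (bas i) * bas j k) (comul_b R (cls R a b)) = (bas (cls R a b) :: _ \<Rightarrow> 'k::field)"
proof -
  have "linext (\<lambda>(i,j) k. eps_L R (bas i) * bas j k) (comul_b R (cls R a b) :: _ \<Rightarrow> 'k)
      = (\<lambda>q. \<Sum>x\<in>{a..b}. delta_cls (cls R a x) * bas (cls R x b) q)"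
    unfolding comul_cls[OF ab] by (simp add: linext_sumbas1 eps_bas)
  also have "\<dots> = (\<lambda>q. \<Sum>x\<in>{a..b}. if x = a then bas (cls R x b) q else 0)"
    by (intro ext sum.cong refl) (auto simp: delta_cls_cls)
  also have "\<dots> = bas (cls R a b)" using ab by (auto intro!: ext)
  finally show ?thesis .
qed

lemma counit_basis_r:
  assumes ab: "a \<le> b"
  shows "linext (\<lambda>(i,j) k. eps_L R (bas j) * bas i k) (comul_b R (cls R a b)) = (bas (cls R a b) :: _ \<Rightarrow> 'k::field)"
proof -
  have "linext (\<lambda>(i,j) k. eps_L R (bas j) * bas i k) (comul_b R (cls R a b) :: _ \<Rightarrow> 'k)
      = (\<lambda>q. \<Sum>x\<in>{a..b}. delta_cls (cls R x b) * bas (cls R a x) q)"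
    unfolding comul_cls[OF ab] by (simp add: linext_sumbas1 eps_bas)
  also have "\<dots> = (\<lambda>q. \<Sum>x\<in>{a..b}. if x = b then bas (cls R a x) q else 0)"
    by (intro ext sum.cong refl) (auto simp: delta_cls_cls)
  also have "\<dots> = bas (cls R a b)" using ab by (auto intro!: ext)
  finally show ?thesis .
qed

lemma counit_full:
  assumes v: "v \<in> fvec (classes R)"
  shows "linext (\<lambda>(i,j) k. eps_L R (bas i) * bas j k) (delta_L R v) = (v :: _ \<Rightarrow> 'k::field)
       \<and> linext (\<lambda>(i,j) k. eps_L R (bas j) * bas i k) (delta_L R v) = v"
proof -
  have fv: "finite (supp v)" using v by (simp add: fvec_def)
  have cl: "\<exists>a b. a \<le> b \<and> I = cls R a b" if "I \<in> supp v" for I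
  proof -
    have "I \<in> classes R" using v that by (auto simp: fvec_def)
    then obtain a b where "a \<le> b" "I = cls R a b" by (rule classesE)
    then show ?thesis by blast
  qed
  have "linext (\<lambda>(i,j) k. eps_L R (bas i) * bas j k) (delta_L R v)
     = linext (\<lambda>I. linext (\<lambda>(i,j) k. eps_L R (bas i) * bas j k) (comul_b R I :: _ \<Rightarrow> 'k)) v"
    unfolding dv by (rule linext_comp[OF fv], rule fs_comul)
  also have "\<dots> = linext bas v"
    by (rule linext_cong) (use cl counit_basis_l in blast)
  finally have 1: "linext (\<lambda>(i,j) k. eps_L R (bas i) * bas j k) (delta_L R v) = v"
    using linext_bas_id[OF fv] by simp
  have "linext (\<lambda>(i,j) k. eps_L R (bas j) * bas i k) (delta_L R v)
     = linext (\<lambda>I. linext (\<lambda>(i,j) k. eps_L R (bas j) * bas i k) (comul_b R I :: _ \<Rightarrow> 'k)) v"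
    unfolding dv by (rule linext_comp[OF fv], rule fs_comul)
  also have "\<dots> = linext bas v"
    by (rule linext_cong) (use cl counit_basis_r in blast)
  finally have 2: "linext (\<lambda>(i,j) k. eps_L R (bas j) * bas i k) (delta_L R v) = v"
    using linext_bas_id[OF fv] by simp
  show ?thesis using 1 2 by simp
qed

lemma D_eta: "(delta_L R (eta_L R r) :: _ \<Rightarrow> 'k::field) = (\<lambda>p. r * tens (eta_L R 1) (eta_L R 1) p)"
proof -
  obtain s :: 'a where s: "Ecl = cls R s s" using E_eq by metis
  have "(delta_L R (eta_L R r) :: _ \<Rightarrow> 'k) = (\<lambda>p. r * comul_b R Ecl p)"
    unfolding eta_eq delta_L_def by (simp add: linext_smult)
  also have "(comul_b R Ecl :: _ \<Rightarrow> 'k) = bas (Ecl, Ecl)"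
    unfolding s by (simp add: comul_cls)
  finally show ?thesis by (simp add: eta1)
qed

lemma eps_zero[simp]: "eps_L R (\<lambda>_. 0) = (0::'k::field)"
  by (simp add: eps_L_def supp_def)

lemma eps_mul:
  assumes H: "hypN R TYPE('k::field)" and I: "I \<in> classes R" and J: "J \<in> classes R"
  shows "(eps_L R (mul_b R I J :: _ \<Rightarrow> 'k)) = delta_cls I * delta_cls J"
proof (cases rule: mul_cases[OF H, of I J])
  case 1
  obtain a b where ab: "a \<le> b" "I = cls R a b" using I by (rule classesE)
  obtain c d where cd: "c \<le> d" "J = cls R c d" using J by (rule classesE)
  have "\<not> (a = b \<and> c = d)"
  proof
    assume "a = b \<and> c = d"
    then have "I = cls R a a" "J = cls R a a" using ab cd E_eq by auto
    then show False using 1(2) by blast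
  qed
  then show ?thesis using 1 ab cd by (auto simp: delta_cls_cls)
next
  case (2 a x b)
  then have "a \<le> b" by (meson order.trans)
  then show ?thesis using 2 by (auto simp: eps_bas delta_cls_cls intro: order.antisym)
qed

lemma eps_nab:
  assumes H: "hypN R TYPE('k::field)" and w: "w \<in> fvec (classes R \<times> classes R)"
  shows "eps_L R (nabla_L R w :: _ \<Rightarrow> 'k) = (\<Sum>p\<in>supp w. w p * eps_L R (bas (fst p)) * eps_L R (bas (snd p)))"
proof -
  have fw: "finite (supp w)" using w by (simp add: fvec_def)
  have "eps_L R (nabla_L R w :: _ \<Rightarrow> 'k) = linext (\<lambda>p. linext (\<lambda>I (u::unit). delta_cls I) ((\<lambda>(I,J). mul_b R I J) p)) w ()"
    unfolding eps_lin[of R] nabla_L_def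
    by (subst linext_comp[OF fw]) (auto simp: fs_mul[OF H] split: prod.splits)
  also have "\<dots> = (\<Sum>p\<in>supp w. w p * eps_L R ((\<lambda>(I,J). mul_b R I J) p :: _ \<Rightarrow> 'k))"
    by (simp add: linext_def eps_lin)
  also have "\<dots> = (\<Sum>p\<in>supp w. w p * eps_L R (bas (fst p)) * eps_L R (bas (snd p)))"
  proof (rule sum.cong[OF refl])
    fix p assume "p \<in> supp w"
    then have "fst p \<in> classes R" "snd p \<in> classes R" using w by (auto simp: fvec_def)
    then show "w p * eps_L R ((\<lambda>(I,J). mul_b R I J) p :: _ \<Rightarrow> 'k) = w p * eps_L R (bas (fst p)) * eps_L R (bas (snd p))"
      by (cases p) (simp add: eps_mul[OF H] eps_bas)
  qed
  finally show ?thesis .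
qed

lemma eps_eta: "eps_L R (eta_L R r) = (r :: 'k::field)"
proof -
  obtain s :: 'a where s: "Ecl = cls R s s" using E_eq by metis
  have "eps_L R (eta_L R r) = r * eps_L R (bas Ecl :: _ \<Rightarrow> 'k)"
    unfolding eta_eq eps_lin by (simp add: linext_smult)
  then show ?thesis by (simp add: eps_bas s delta_cls_cls)
qed

end

context setting begin

lemma S_bas: "hatmu R (bas X) = (\<lambda>J. (mobius R X :: 'k::field) * bas X J)"
  by (simp add: hatmu_def)

lemma lin_S: "lin_on (fvec (classes R)) (fvec (classes R)) (hatmu R :: _ \<Rightarrow> _ \<Rightarrow> 'k::field)"
  unfolding hatmu_def
proof (rule lin_on_linext)
  fix I assume "I \<in> classes R"
  then show "(\<lambda>J. (mobius R I :: 'k) * bas I J) \<in> fvec (classes R)"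
    using supp_sbas[of "mobius R I :: 'k" I] by (auto simp: fvec_def intro: finite_subset)
qed

lemma tSid:
  assumes ab: "a \<le> b"
  shows "tmap (hatmu R) id (comul_b R (cls R a b)) =
     (\<lambda>q. \<Sum>x\<in>{a..b}. (mobius R (cls R a x) :: 'k::field) * bas (cls R a x, cls R x b) q)"
  unfolding comul_cls[OF ab] tmap_def by (simp add: linext_sumbas1 S_bas tens_sbas_l)

lemma tidS:
  assumes ab: "a \<le> b"
  shows "tmap id (hatmu R) (comul_b R (cls R a b)) =
     (\<lambda>q. \<Sum>x\<in>{a..b}. (mobius R (cls R x b) :: 'k::field) * bas (cls R a x, cls R x b) q)"
  unfolding comul_cls[OF ab] tmap_def by (simp add: linext_sumbas1 S_bas tens_sbas_r)

lemma eta_eps: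
  assumes fv: "finite (supp v)"
  shows "eta_L R (eps_L R v) = linext (\<lambda>I K. (delta_cls I :: 'k::field) * bas Ecl K) v"
  by (auto simp: eta_eq eps_L_def linext_def sum_distrib_right mult.assoc intro!: ext)

lemma bas_delta:
  assumes ab: "a \<le> b"
  shows "(\<lambda>K. (delta_cls (cls R a b) :: 'k::field) * bas Ecl K) = (\<lambda>K. (if a = b then 1 else 0) * bas (cls R a b) K)"
  using ab by (auto simp: delta_cls_cls E_eq)

lemma antipode_full:
  assumes H: "hypN R TYPE('k::field)" and v: "v \<in> fvec (classes R)"
  shows "conv (nabla_L R) (delta_L R) (hatmu R) id v = (eta_L R (eps_L R v) :: _ \<Rightarrow> 'k)
       \<and> conv (nabla_L R) (delta_L R) id (hatmu R) v = eta_L R (eps_L R v)"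
proof -
  have fv: "finite (supp v)" using v by (simp add: fvec_def)
  have cl: "\<exists>a b. a \<le> b \<and> I = cls R a b" if "I \<in> supp v" for I
  proof -
    have "I \<in> classes R" using v that by (auto simp: fvec_def)
    then obtain a b where "a \<le> b" "I = cls R a b" by (rule classesE)
    then show ?thesis by blast
  qed
  have fin1: "finite (supp (tmap (hatmu R) id (comul_b R I) :: _ \<Rightarrow> 'k))" if Isv: "I \<in> supp v" for I
  proof -
    obtain a b where ab: "a \<le> b" "I = cls R a b" using cl[OF Isv] by blast
    show ?thesis unfolding ab(2) tSid[OF ab(1)] by (rule fs_sumbas) simp
  qed
  have fin2: "finite (supp (tmap id (hatmu R) (comul_b R I) :: _ \<Rightarrow> 'k))" if Isv: "I \<in> supp v" for I
  proof -
    obtain a b where ab: "a \<le> b" "I = cls R a b" using cl[OF Isv] by blast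
    show ?thesis unfolding ab(2) tidS[OF ab(1)] by (rule fs_sumbas) simp
  qed
  have "conv (nabla_L R) (delta_L R) (hatmu R) id v
      = nabla_L R (linext (\<lambda>I. tmap (hatmu R) id (comul_b R I) :: _ \<Rightarrow> 'k) v)"
    unfolding conv_def dv by (subst D_lin[OF fv]) (simp_all add: fs_comul)
  also have "\<dots> = linext (\<lambda>I. nabla_L R (tmap (hatmu R) id (comul_b R I) :: _ \<Rightarrow> 'k)) v"
    by (rule nab_comp[OF fv fin1])
  also have "\<dots> = linext (\<lambda>I K. (delta_cls I :: 'k) * bas Ecl K) v"
  proof (rule linext_cong)
    fix I assume "I \<in> supp v"
    then obtain a b where ab: "a \<le> b" "I = cls R a b" using cl by blast
    have "nabla_L R (tmap (hatmu R) id (comul_b R I) :: _ \<Rightarrow> 'k)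
       = (\<lambda>q. \<Sum>x\<in>{a..b}. mobius R (cls R a x) * mul_b R (cls R a x) (cls R x b) q)"
      unfolding ab(2) tSid[OF ab(1)] nabla_L_def by (simp add: linext_sumbas)
    also have "\<dots> = (\<lambda>q. \<Sum>x\<in>{a..b}. mobius R (cls R a x) * bas (cls R a b) q)"
      by (intro ext sum.cong refl) (auto simp: mul_F1[OF H])
    also have "\<dots> = (\<lambda>K. (if a = b then 1 else 0) * bas (cls R a b) K)"
      using mob_sumL[OF ab(1), where 'k='k] by (simp add: sum_distrib_right[symmetric])
    finally have X: "nabla_L R (tmap (hatmu R) id (comul_b R I) :: _ \<Rightarrow> 'k) = (\<lambda>K. (if a = b then 1 else 0) * bas (cls R a b) K)" .
    show "nabla_L R (tmap (hatmu R) id (comul_b R I) :: _ \<Rightarrow> 'k) = (\<lambda>K. delta_cls I * bas Ecl K)"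
      using X unfolding ab(2) bas_delta[OF ab(1), where 'k='k] .
  qed
  finally have 1: "conv (nabla_L R) (delta_L R) (hatmu R) id v = (eta_L R (eps_L R v) :: _ \<Rightarrow> 'k)"
    using eta_eps[OF fv] by simp
  have "conv (nabla_L R) (delta_L R) id (hatmu R) v
      = nabla_L R (linext (\<lambda>I. tmap id (hatmu R) (comul_b R I) :: _ \<Rightarrow> 'k) v)"
    unfolding conv_def dv by (subst D_lin[OF fv]) (simp_all add: fs_comul)
  also have "\<dots> = linext (\<lambda>I. nabla_L R (tmap id (hatmu R) (comul_b R I) :: _ \<Rightarrow> 'k)) v"
    by (rule nab_comp[OF fv fin2])
  also have "\<dots> = linext (\<lambda>I K. (delta_cls I :: 'k) * bas Ecl K) v"
  proof (rule linext_cong)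
    fix I assume "I \<in> supp v"
    then obtain a b where ab: "a \<le> b" "I = cls R a b" using cl by blast
    have "nabla_L R (tmap id (hatmu R) (comul_b R I) :: _ \<Rightarrow> 'k)
       = (\<lambda>q. \<Sum>x\<in>{a..b}. mobius R (cls R x b) * mul_b R (cls R a x) (cls R x b) q)"
      unfolding ab(2) tidS[OF ab(1)] nabla_L_def by (simp add: linext_sumbas)
    also have "\<dots> = (\<lambda>q. \<Sum>x\<in>{a..b}. mobius R (cls R x b) * bas (cls R a b) q)"
      by (intro ext sum.cong refl) (auto simp: mul_F1[OF H])
    also have "\<dots> = (\<lambda>K. (if a = b then 1 else 0) * bas (cls R a b) K)"
      using mob_sumR[OF ab(1), where 'k='k] by (simp add: sum_distrib_right[symmetric])
    finally have X: "nabla_L R (tmap id (hatmu R) (comul_b R I) :: _ \<Rightarrow> 'k) = (\<lambda>K. (if a = b then 1 else 0) * bas (cls R a b) K)" .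
    show "nabla_L R (tmap id (hatmu R) (comul_b R I) :: _ \<Rightarrow> 'k) = (\<lambda>K. delta_cls I * bas Ecl K)"
      using X unfolding ab(2) bas_delta[OF ab(1), where 'k='k] .
  qed
  finally have 2: "conv (nabla_L R) (delta_L R) id (hatmu R) v = (eta_L R (eps_L R v) :: _ \<Rightarrow> 'k)"
    using eta_eps[OF fv] by simp
  show ?thesis using 1 2 by simp
qed

end

context setting begin

lemma lin_N: "hypN R TYPE('k::field) \<Longrightarrow> lin_on (fvec (classes R \<times> classes R)) (fvec (classes R)) (nabla_L R :: _ \<Rightarrow> _ \<Rightarrow> 'k)"
  unfolding nabla_L_def by (rule lin_on_linext) (auto simp: mul_in)

lemma lin_D: "lin_on (fvec (classes R)) (fvec (classes R \<times> classes R)) (delta_L R :: _ \<Rightarrow> _ \<Rightarrow> 'k::field)"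
  unfolding delta_L_def by (rule lin_on_linext) (rule comul_in)

lemma lin_eps: "lin_form (fvec (classes R)) (eps_L R :: _ \<Rightarrow> 'k::field)"
  unfolding lin_form_def
proof (intro conjI ballI allI)
  fix u v :: "_ \<Rightarrow> 'k" assume "u \<in> fvec (classes R)" "v \<in> fvec (classes R)"
  then have "finite (supp u)" "finite (supp v)" by (auto simp: fvec_def)
  from linext_add[OF this, of "\<lambda>I (_::unit). delta_cls I"]
  show "eps_L R (\<lambda>i. u i + v i) = eps_L R u + eps_L R v"
    unfolding eps_lin by (metis (no_types))
next
  fix c :: 'k and v :: "_ \<Rightarrow> 'k" assume "v \<in> fvec (classes R)"
  then have "finite (supp v)" by (auto simp: fvec_def)
  from linext_smult[OF this, of "\<lambda>I (_::unit). delta_cls I" c]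
  show "eps_L R (\<lambda>i. c * v i) = c * eps_L R v"
    unfolding eps_lin by (metis (no_types))
qed

lemma eta_in: "(eta_L R r :: _ \<Rightarrow> 'k::field) \<in> fvec (classes R)"
  unfolding eta_eq using supp_sbas[of r Ecl] Ecl_in by (auto simp: fvec_def intro: finite_subset)

lemma bialg:
  assumes H: "hypN R TYPE('k::field)"
  shows "mweak_bialgebra (classes R) (nabla_L R) (eta_L R) (delta_L R) (eps_L R :: _ \<Rightarrow> 'k)"
  unfolding mweak_bialgebra_def
  using lin_N[OF H] lin_D[where 'k='k] lin_eps[where 'k='k] eta_in[where 'k='k] assoc_full[OF H] unit_l[OF H] unit_r[OF H]
    coassoc_full[where 'k='k] counit_full[where 'k='k] D_eta[where 'k='k] eps_nab[OF H] eps_eta[where 'k='k]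
  by (simp add: eta_eq distrib_right mult.assoc)

end

theorem corollary7p5:
  fixes R :: "(('a::order \<times> 'a) \<times> ('a \<times> 'a)) set"
  assumes "countable (UNIV :: 'a set)"
    and "locally_finite TYPE('a)"
    and "bialg_compatible R"
    and "\<forall>a x b :: 'a. a \<le> x \<and> x \<le> b \<longrightarrow>
           (nabla_L R (tens (bas (cls R a x)) (bas (cls R x b))) :: ('a \<times> 'a) set \<Rightarrow> 'k::field)
             = bas (cls R a b)"
  shows "mweak_hopf (classes R) (nabla_L R) (eta_L R) (delta_L R) (eps_L R :: (('a \<times> 'a) set \<Rightarrow> 'k) \<Rightarrow> 'k)
       \<and> is_antipode (classes R) (nabla_L R) (eta_L R) (delta_L R) (eps_L R) (hatmu R :: (('a \<times> 'a) set \<Rightarrow> 'k) \<Rightarrow> _)"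
proof -
  interpret setting R using assms(2,3) by unfold_locales
  have H: "hypN R TYPE('k)" using assms(4) by (simp add: hypN_def)
  have A: "is_antipode (classes R) (nabla_L R) (eta_L R) (delta_L R) (eps_L R) (hatmu R :: (('a \<times> 'a) set \<Rightarrow> 'k) \<Rightarrow> _)"
    unfolding is_antipode_def using lin_S antipode_full[OF H] by blast
  show ?thesis unfolding mweak_hopf_def using bialg[OF H] A by blast
qed

end
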